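(* Let $K=\mathbb{Q}(\sqrt m)$ be a Deng–Li field and write its fundamental unit as $\varepsilon=a+b\sqrt m$ with $a,b\in\mathbb{Z}$. Then $a=4a'$ with $a'$ an odd integer.
   Context: A Deng–Li field is $K=\mathbb{Q}(\sqrt m)$, $m=\ell_1\ell_2\cdots\ell_n$ with $n\ge 2$ even and $\ell_1,\dots,\ell_n$ distinct primes such that: - $\ell_1\equiv3\pmod8$; - $\ell_i\equiv5\pmod8$ for $i\ge2$; - $\big(\frac{\ell_1}{\ell_2}\big)=-1$, and $\big(\frac{\ell_1}{\ell_j}\big)=1$ for $j\ge3$; - $\big(\frac{\ell_i}{\ell_j}\big)=-1$ for $2\le i<j\le n$ (Legendre symbols). Here $m\equiv7\pmod 8$, the ring of integers is $\mathbb{Z}[\sqrt m]$, and the fundamental unit has norm $1$. *)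

theory Defs
  imports "HOL-Number_Theory.Number_Theory"
begin

text \<open>Units of the ring Z[sqrt m] (for nonsquare m > 0, the ring of integers of Q(sqrt m)
  when m = 3 mod 4 squarefree): x + y sqrt m is a unit iff its norm x^2 - m y^2 is 1 or -1.\<close>
definition is_unit_Zsqrt :: "int \<Rightarrow> int \<Rightarrow> int \<Rightarrow> bool" where
  "is_unit_Zsqrt m x y \<longleftrightarrow> (x^2 - m * y^2 = 1 \<or> x^2 - m * y^2 = -1)"

definition fundamental_unit :: "int \<Rightarrow> int \<Rightarrow> int \<Rightarrow> bool" where
  "fundamental_unit m a b \<longleftrightarrow>
     is_unit_Zsqrt m a b \<and> of_int a + of_int b * sqrt (of_int m) > (1::real) \<and>
     (\<forall>x y. is_unit_Zsqrt m x y \<and> of_int x + of_int y * sqrt (of_int m) > (1::real) \<longrightarrow>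
        of_int a + of_int b * sqrt (of_int m) \<le> (of_int x + of_int y * sqrt (of_int m) :: real))"

end

theory Submission
  imports Defs "HOL-Computational_Algebra.Nth_Powers"
begin



lemma leg_cong: assumes "[x = y] (mod int p)" shows "Legendre x (int p) = Legendre y (int p)"
proof -
  have 1: "[x = 0] (mod int p) \<longleftrightarrow> [y = 0] (mod int p)" using assms by (meson cong_sym cong_trans)
  have 2: "QuadRes (int p) x \<longleftrightarrow> QuadRes (int p) y" unfolding QuadRes_def using assms by (meson cong_sym cong_trans)
  show ?thesis using 1 2 by (simp add: Legendre_def)
qed

lemma pm1_eq:
  fixes a b :: int and p :: nat
  assumes "a \<in> {-1,0,1}" "b \<in> {-1,0,1}" "[a = b] (mod int p)" "2 < p"
  shows "a = b"
proof -
  have d: "int p dvd a - b" using assms(3) by (simp add: cong_iff_dvd_diff)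
  have "\<bar>a - b\<bar> < int p" using assms(1,2,4) by (auto simp: abs_if)
  then show ?thesis using d dvd_imp_le_int[of "a - b" "int p"] by fastforce
qed

lemma leg_vals: "Legendre x p \<in> {-1,0,1}" by (simp add: Legendre_def)

lemma leg_mult:
  assumes "prime p" "2 < p"
  shows "Legendre (x*y) (int p) = Legendre x (int p) * Legendre y (int p)"
proof -
  have "[Legendre (x*y) (int p) = (x*y) ^ ((p - 1) div 2)] (mod int p)"
    using euler_criterion assms by blast
  moreover have "[Legendre x (int p) * Legendre y (int p) = x ^ ((p - 1) div 2) * y ^ ((p - 1) div 2)] (mod int p)"
    using euler_criterion assms cong_mult by blast
  ultimately have "[Legendre (x*y) (int p) = Legendre x (int p) * Legendre y (int p)] (mod int p)"
    by (metis cong_sym cong_trans power_mult_distrib)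
  moreover have "Legendre x (int p) * Legendre y (int p) \<in> {-1,0,1}"
    using leg_vals[of x "int p"] leg_vals[of y "int p"] by auto
  ultimately show ?thesis using pm1_eq[OF leg_vals _ _ assms(2)] by blast
qed

lemma leg_sq:
  assumes "prime p" "\<not> int p dvd y"
  shows "Legendre (y^2) (int p) = 1"
proof -
  have "\<not> [y^2 = 0] (mod int p)"
    using assms by (simp add: cong_0_iff prime_dvd_power_int_iff prime_nat_iff_prime)
  moreover have "QuadRes (int p) (y^2)" unfolding QuadRes_def by (intro exI[of _ y]) simp
  ultimately show ?thesis by (simp add: Legendre_def)
qed

lemma leg_m1:
  assumes "prime p" "2 < p"
  shows "Legendre (-1) (int p) = (if p mod 4 = 1 then 1 else -1)"
proof -
  have e: "[Legendre (-1) (int p) = (-1) ^ ((p - 1) div 2)] (mod int p)"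
    using euler_criterion assms by blast
  have "odd p" using assms prime_odd_nat by blast
  then have "p mod 4 = 1 \<or> p mod 4 = 3" by presburger
  moreover have "p mod 4 = 1 \<Longrightarrow> even ((p - 1) div 2)" by presburger
  moreover have "p mod 4 = 3 \<Longrightarrow> odd ((p - 1) div 2)" by presburger
  ultimately have "(-1::int) ^ ((p - 1) div 2) = (if p mod 4 = 1 then 1 else -1)" by auto
  moreover have "(if p mod 4 = 1 then 1 else -1) \<in> {-1,0,1::int}" by auto
  ultimately show ?thesis using e pm1_eq[OF leg_vals _ _ assms(2)] by metis
qed

lemma leg_recip_sym:
  assumes "prime p" "prime q" "2 < p" "2 < q" "p \<noteq> q" "p mod 4 = 1"
  shows "Legendre (int p) (int q) = Legendre (int q) (int p)"
proof -
  have "even ((p - 1) div 2)" using assms(6) by presburger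
  then have "Legendre (int p) (int q) * Legendre (int q) (int p) = 1"
    using Quadratic_Reciprocity[OF assms(1,3,2,4,5)] by simp
  then show ?thesis using leg_vals[of "int p" "int q"] leg_vals[of "int q" "int p"] by auto
qed

lemma leg_2:
  assumes "prime p" "p mod 8 = 3 \<or> p mod 8 = 5"
  shows "Legendre 2 (int p) = -1"
proof -
  have p2: "2 < p" using assms(2) by auto
  have nd: "[2 \<noteq> 0] (mod int p)"
  proof
    assume "[2 = 0] (mod int p)"
    then have "int p dvd 2" by (simp add: cong_0_iff)
    then have "int p \<le> 2" using zdvd_imp_le[of "int p" 2] by simp
    with p2 show False by simp
  qed
  interpret G: GAUSS p 2 using assms(1) p2 nd by unfold_locales auto
  define h where "h = (int p - 1) div 2"
  have C: "G.C = (\<lambda>x. x*2) ` {0<..h}"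
  proof -
    have "\<And>x. x \<in> {0<..h} \<Longrightarrow> (x*2) mod int p = x*2"
      unfolding h_def by (auto intro!: mod_pos_pos_trivial)
    then show ?thesis unfolding G.C_def G.B_def G.A_def h_def[symmetric] image_image
      by (auto intro!: image_cong)
  qed
  have E: "G.E = (\<lambda>x. x*2) ` {h div 2<..h}"
    unfolding G.E_def C h_def[symmetric] by auto
  have "card G.E = card {h div 2<..h}"
    unfolding E by (rule card_image) (auto simp: inj_on_def)
  also have "\<dots> = nat (h - h div 2)" by simp
  finally have cE: "card G.E = nat (h - h div 2)" .
  have "int p mod 8 = 3 \<or> int p mod 8 = 5" using assms(2) by presburger
  then have "odd (h - h div 2)" unfolding h_def by presburger
  moreover have "h - h div 2 \<ge> 0" unfolding h_def by simp
  ultimately have "odd (card G.E)" unfolding cE by (simp add: even_nat_iff)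
  then show ?thesis using G.gauss_lemma by simp
qed

lemma leg_one: assumes "prime p" "2 < p" shows "Legendre 1 (int p) = 1"
proof -
  have "\<not> [1 = 0] (mod int p)" using assms by (auto simp: cong_0_iff)
  moreover have "QuadRes (int p) 1" unfolding QuadRes_def by (intro exI[of _ 1]) simp
  ultimately show ?thesis by (simp add: Legendre_def)
qed

lemma leg_prod:
  assumes "prime p" "2 < p" "finite S"
  shows "Legendre (\<Prod>j\<in>S. f j) (int p) = (\<Prod>j\<in>S. Legendre (f j) (int p))"
  using assms(3) by induction (simp_all add: leg_one[OF assms(1,2)] leg_mult[OF assms(1,2)])

lemma prod_pm1:
  assumes "finite S"
  shows "(\<Prod>j\<in>S. if Q j then -1 else (1::int)) = (-1) ^ card {j\<in>S. Q j}"
  using assms by (simp add: prod.If_cases Int_def)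

lemma leg_cond:
  fixes D D' u v c :: int
  assumes "prime p" "2 < p" "int p dvd D'" "D*u^2 - D'*v^2 = c" "\<not> int p dvd c"
  shows "Legendre D (int p) = Legendre c (int p)"
proof -
  have e: "D*u^2 - c = D'*v^2" using assms(4) by simp
  have "[D*u^2 = c] (mod int p)"
    unfolding cong_iff_dvd_diff e using assms(3) by simp
  then have 1: "Legendre (D*u^2) (int p) = Legendre c (int p)" by (rule leg_cong)
  have "\<not> int p dvd u"
  proof
    assume "int p dvd u"
    then have "int p dvd D*u^2 - D'*v^2" using assms(3) by (simp add: power2_eq_square)
    with assms(4,5) show False by simp
  qed
  then have "Legendre (u^2) (int p) = 1" using leg_sq assms(1) by blast
  with 1 show ?thesis by (simp add: leg_mult[OF assms(1,2)])
qed

lemma leg_cond2: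
  fixes D D' u v c :: int
  assumes "prime p" "2 < p" "int p dvd D" "D*u^2 - D'*v^2 = c" "\<not> int p dvd c"
  shows "Legendre (-1) (int p) * Legendre D' (int p) = Legendre c (int p)"
proof -
  have e: "(-D')*v^2 - (-D)*u^2 = c" using assms(4) by simp
  have "Legendre (-D') (int p) = Legendre c (int p)"
    by (rule leg_cond[OF assms(1,2) _ e assms(5)]) (use assms(3) in simp)
  then show ?thesis using leg_mult[OF assms(1,2), of "-1" D'] by simp
qed




lemma prod_primes_dvd:
  fixes l :: "nat \<Rightarrow> nat" and Z :: int
  assumes "finite S" "\<forall>i\<in>S. prime (l i)" "inj_on l S" "\<forall>i\<in>S. int (l i) dvd Z"
  shows "(\<Prod>i\<in>S. int (l i)) dvd Z"
  using assms
proof (induction S rule: finite_induct)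
  case empty then show ?case by simp
next
  case (insert x F)
  have cop: "coprime (int (l x)) (\<Prod>i\<in>F. int (l i))"
  proof (rule prod_coprime_right)
    fix i assume i: "i \<in> F"
    have "l x \<noteq> l i" using insert.prems(2) insert.hyps(2) i by (metis inj_onD insertI1 insertI2)
    moreover have "prime (l x)" "prime (l i)" using insert.prems(1) i by auto
    ultimately have "coprime (l x) (l i)" using primes_coprime by blast
    then show "coprime (int (l x)) (int (l i))" by simp
  qed
  have "(\<Prod>i\<in>F. int (l i)) dvd Z" using insert by (simp add: inj_on_insert)
  moreover have "int (l x) dvd Z" using insert.prems(3) by simp
  ultimately show ?case using insert.hyps cop by (simp add: divides_mult)
qed

lemma coprime_square:
  fixes X Y c :: int
  assumes "X > 0" "Y > 0" "coprime X Y" "X * Y = c^2"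
  shows "\<exists>u. u > 0 \<and> X = u^2"
proof -
  have cp: "coprime (nat X) (nat Y)" using assms(1,2,3)
    by (metis coprime_int_iff int_nat_eq less_le_not_le)
  have "nat X * nat Y = (nat \<bar>c\<bar>)^2" using assms(1,2,4)
    by (metis abs_ge_zero nat_mult_distrib nat_power_eq less_le_not_le power2_abs zero_le_power2)
  then have "is_nth_power 2 (nat X * nat Y)" by simp
  then have "is_nth_power 2 (nat X)" using is_nth_power_mult_coprime_natD(1)[OF cp] assms(1,2) by simp
  then obtain y where y: "nat X = y^2" by (auto simp: is_nth_power_def)
  then have "X = (int y)^2" using assms(1) by (metis int_nat_eq of_nat_power less_le_not_le)
  moreover have "int y > 0" using assms(1) \<open>X = (int y)^2\<close> by (cases "y = 0") auto
  ultimately show ?thesis by blast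
qed

lemma factor:
  fixes X Y c :: int and l :: "nat \<Rightarrow> nat" and I :: "nat set"
  assumes fin: "finite I" and pr: "\<forall>i\<in>I. prime (l i)" and inj: "inj_on l I"
    and pos: "X > 0" "Y > 0" and cop: "coprime X Y"
    and eq: "X * Y = (\<Prod>i\<in>I. int (l i)) * c^2"
  shows "\<exists>S u v. S \<subseteq> I \<and> u > 0 \<and> v > 0 \<and> X = (\<Prod>i\<in>S. int (l i)) * u^2
           \<and> Y = (\<Prod>i\<in>I-S. int (l i)) * v^2"
proof -
  define S where "S = {i\<in>I. int (l i) dvd X}"
  have SI: "S \<subseteq> I" unfolding S_def by auto
  have finS: "finite S" using fin SI finite_subset by blast
  define d where "d = (\<Prod>i\<in>S. int (l i))"
  define d' where "d' = (\<Prod>i\<in>I-S. int (l i))"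
  have dX: "d dvd X" unfolding d_def
    by (rule prod_primes_dvd) (use finS pr inj SI in \<open>auto simp: S_def intro: inj_on_subset\<close>)
  have "\<forall>i\<in>I-S. int (l i) dvd Y"
  proof
    fix i assume i: "i \<in> I - S"
    have pi: "prime (int (l i))" using pr i by auto
    have "int (l i) dvd (\<Prod>i\<in>I. int (l i))" using i fin by (intro dvd_prodI) auto
    then have "int (l i) dvd X * Y" unfolding eq by simp
    then have "int (l i) dvd X \<or> int (l i) dvd Y" using pi prime_dvd_mult_iff by blast
    then show "int (l i) dvd Y" using i unfolding S_def by auto
  qed
  then have dY: "d' dvd Y" unfolding d'_def
    by (intro prod_primes_dvd) (use fin pr inj in \<open>auto intro: inj_on_subset\<close>)
  obtain X' where X': "X = d * X'" using dX by blast
  obtain Y' where Y': "Y = d' * Y'" using dY by blast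
  have dpos: "d > 0" unfolding d_def using pr SI by (intro prod_pos) (auto simp: prime_gt_0_nat)
  have d'pos: "d' > 0" unfolding d'_def using pr by (intro prod_pos) (auto simp: prime_gt_0_nat)
  have m: "(\<Prod>i\<in>I. int (l i)) = d' * d" unfolding d_def d'_def
    using prod.subset_diff[OF SI fin] by simp
  have "d * d' * (X' * Y') = d * d' * c^2" using eq X' Y' m by (simp add: algebra_simps)
  then have XY: "X' * Y' = c^2" using dpos d'pos by simp
  have X'pos: "X' > 0" using pos(1) dpos X' by (simp add: zero_less_mult_iff)
  have Y'pos: "Y' > 0" using pos(2) d'pos Y' by (simp add: zero_less_mult_iff)
  have cop': "coprime X' Y'" using cop X' Y' by simp
  obtain u where u: "u > 0" "X' = u^2" using coprime_square[OF X'pos Y'pos cop' XY] by blast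
  obtain v where v: "v > 0" "Y' = v^2"
    using coprime_square[OF Y'pos X'pos _, of c] cop' XY by (auto simp: coprime_commute mult.commute)
  show ?thesis using SI u v X' Y' unfolding d_def d'_def by blast
qed



locale DL =
  fixes n :: nat and l :: "nat \<Rightarrow> nat"
  assumes n2: "n \<ge> 2" and ev: "even n"
    and pr: "\<forall>i\<in>{1..n}. prime (l i)"
    and inj: "inj_on l {1..n}"
    and l1: "l 1 mod 8 = 3"
    and lo: "\<forall>i\<in>{2..n}. l i mod 8 = 5"
    and L12: "Legendre (int (l 1)) (int (l 2)) = -1"
    and L1j: "\<forall>j\<in>{3..n}. Legendre (int (l 1)) (int (l j)) = 1"
    and Lij: "\<forall>i j. 2 \<le> i \<and> i < j \<and> j \<le> n \<longrightarrow> Legendre (int (l i)) (int (l j)) = -1"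
begin

definition Q :: "nat \<Rightarrow> nat \<Rightarrow> bool" where
  "Q k j = (if k = 1 then j = 2 else if j = 1 then k = 2 else True)"

lemma prI: "i \<in> {1..n} \<Longrightarrow> prime (l i)" using pr by auto
lemma gt2: "i \<in> {1..n} \<Longrightarrow> 2 < l i"
proof -
  assume i: "i \<in> {1..n}"
  show "2 < l i"
  proof (cases "i = 1")
    case True then show ?thesis using l1 by presburger
  next
    case False then have "l i mod 8 = 5" using lo i by auto
    then show ?thesis by presburger
  qed
qed
lemma mod4: "i \<in> {2..n} \<Longrightarrow> l i mod 4 = 1"
proof -
  assume "i \<in> {2..n}" then have "l i mod 8 = 5" using lo by auto
  then show ?thesis by presburger
qed

lemma sym: assumes "i \<in> {1..n}" "j \<in> {2..n}" "i \<noteq> j"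
  shows "Legendre (int (l j)) (int (l i)) = Legendre (int (l i)) (int (l j))"
proof -
  have j1: "j \<in> {1..n}" using assms(2) by auto
  have "l j \<noteq> l i" using inj assms(1,3) j1 by (metis inj_onD)
  then show ?thesis using leg_recip_sym[OF prI[OF j1] prI[OF assms(1)] gt2[OF j1] gt2[OF assms(1)] _ mod4[OF assms(2)]]
    by blast
qed

lemma tab: assumes "j \<in> {1..n}" "k \<in> {1..n}" "j \<noteq> k"
  shows "Legendre (int (l j)) (int (l k)) = (if Q k j then -1 else 1)"
proof -
  consider "j = 1" "k = 2" | "j = 1" "k \<ge> 3" | "j = 2" "k = 1" | "j \<ge> 3" "k = 1"
    | "j \<ge> 2" "k \<ge> 2" "j < k" | "j \<ge> 2" "k \<ge> 2" "k < j"
    using assms by fastforce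
  then show ?thesis
  proof cases
    case 1 then show ?thesis using L12 by (simp add: Q_def)
  next
    case 2 then show ?thesis using L1j assms by (simp add: Q_def)
  next
    case 3 then show ?thesis using L12 sym[of 1 2] assms by (simp add: Q_def)
  next
    case 4 then show ?thesis using L1j sym[of 1 j] assms by (simp add: Q_def)
  next
    case 5 then show ?thesis using Lij assms by (simp add: Q_def)
  next
    case 6 then show ?thesis using Lij[rule_format, of k j] sym[of k j] assms by (simp add: Q_def)
  qed
qed

lemma legP: assumes "S \<subseteq> {1..n}" "k \<in> {1..n}" "k \<notin> S"
  shows "Legendre (\<Prod>j\<in>S. int (l j)) (int (l k)) = (-1) ^ card {j\<in>S. Q k j}"
proof -
  have fin: "finite S" using assms(1) finite_subset by blast
  have "Legendre (\<Prod>j\<in>S. int (l j)) (int (l k)) = (\<Prod>j\<in>S. Legendre (int (l j)) (int (l k)))"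
    using leg_prod[OF prI[OF assms(2)] gt2[OF assms(2)] fin] .
  also have "\<dots> = (\<Prod>j\<in>S. if Q k j then -1 else 1)"
    using assms by (intro prod.cong refl tab) auto
  also have "\<dots> = (-1) ^ card {j\<in>S. Q k j}" using prod_pm1[OF fin] .
  finally show ?thesis .
qed


lemma pw_even: "(-1::int)^c = 1 \<longleftrightarrow> even c" by (cases "even c") auto
lemma pw_odd: "(-1::int)^c = -1 \<longleftrightarrow> odd c" by (cases "even c") auto

lemma cQ1: "card {j\<in>W. Q 1 j} = (if 2 \<in> W then 1 else 0)"
proof -
  have "{j\<in>W. Q 1 j} = (if 2 \<in> W then {2} else {})" by (auto simp: Q_def)
  then show ?thesis by simp
qed
lemma cQ2: "{j\<in>W. Q 2 j} = W" by (auto simp: Q_def)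
lemma cQk: "k \<ge> 3 \<Longrightarrow> {j\<in>W. Q k j} = W - {1}" by (auto simp: Q_def)

lemma legm1: "k \<in> {1..n} \<Longrightarrow> Legendre (-1) (int (l k)) = (if k = 1 then -1 else 1)"
proof -
  assume k: "k \<in> {1..n}"
  have "Legendre (-1) (int (l k)) = (if l k mod 4 = 1 then 1 else -1)" using leg_m1[OF prI[OF k] gt2[OF k]] .
  moreover have "k = 1 \<Longrightarrow> l k mod 4 = 3" using l1 by presburger
  moreover have "k \<noteq> 1 \<Longrightarrow> l k mod 4 = 1" using mod4 k by auto
  ultimately show ?thesis by auto
qed

lemma conds:
  fixes u v c :: int
  assumes SI: "S \<subseteq> {1..n}" and eq: "(\<Prod>j\<in>S. int (l j)) * u^2 - (\<Prod>j\<in>{1..n}-S. int (l j)) * v^2 = c"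
    and c: "c = 1 \<or> c = 2"
  shows "\<forall>k\<in>{1..n}-S. (-1) ^ card {j\<in>S. Q k j} = Legendre c (int (l k))"
    "\<forall>k\<in>S. Legendre (-1) (int (l k)) * (-1) ^ card {j\<in>{1..n}-S. Q k j} = Legendre c (int (l k))"
proof -
  have nd: "\<not> int (l k) dvd c" if "k \<in> {1..n}" for k
  proof
    assume "int (l k) dvd c"
    then have "int (l k) \<le> 2" using c zdvd_imp_le[of "int (l k)" c] by auto
    with gt2[OF that] show False by simp
  qed
  show "\<forall>k\<in>{1..n}-S. (-1) ^ card {j\<in>S. Q k j} = Legendre c (int (l k))"
  proof
    fix k assume k: "k \<in> {1..n}-S"
    have "int (l k) dvd (\<Prod>j\<in>{1..n}-S. int (l j))" using k by (intro dvd_prodI) auto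
    then have "Legendre (\<Prod>j\<in>S. int (l j)) (int (l k)) = Legendre c (int (l k))"
      using leg_cond[OF prI gt2 _ eq nd] k by auto
    then show "(-1) ^ card {j\<in>S. Q k j} = Legendre c (int (l k))" using legP[OF SI, of k] k by auto
  qed
  show "\<forall>k\<in>S. Legendre (-1) (int (l k)) * (-1) ^ card {j\<in>{1..n}-S. Q k j} = Legendre c (int (l k))"
  proof
    fix k assume k: "k \<in> S"
    have kI: "k \<in> {1..n}" using k SI by auto
    have "int (l k) dvd (\<Prod>j\<in>S. int (l j))" using k SI finite_subset by (intro dvd_prodI) auto
    then have "Legendre (-1) (int (l k)) * Legendre (\<Prod>j\<in>{1..n}-S. int (l j)) (int (l k)) = Legendre c (int (l k))"
      using leg_cond2[OF prI[OF kI] gt2[OF kI] _ eq nd[OF kI]] by auto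
    then show "Legendre (-1) (int (l k)) * (-1) ^ card {j\<in>{1..n}-S. Q k j} = Legendre c (int (l k))"
      using legP[of "{1..n}-S" k] k kI by auto
  qed
qed

lemma cardST: "S \<subseteq> {1..n} \<Longrightarrow> card S + card ({1..n} - S) = n"
  by (metis card_Diff_subset card_atLeastAtMost diff_Suc_1 finite_atLeastAtMost finite_subset le_add_diff_inverse card_mono)

lemma caseB:
  fixes u v :: int
  assumes SI: "S \<subseteq> {1..n}" and eq: "(\<Prod>j\<in>S. int (l j)) * u^2 - (\<Prod>j\<in>{1..n}-S. int (l j)) * v^2 = 2"
  shows "1 \<notin> S \<and> odd (card S)"
proof -
  define T where "T = {1..n} - S"
  note cT = conds[OF SI eq, folded T_def, simplified]
  have L2: "Legendre 2 (int (l k)) = -1" if "k \<in> {1..n}" for k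
  proof (rule leg_2[OF prI[OF that]])
    show "l k mod 8 = 3 \<or> l k mod 8 = 5" using l1 lo that by (cases "k = 1") auto
  qed
  have ST: "card S + card T = n" unfolding T_def using cardST[OF SI] .
  have I1: "1 \<in> {1..n}" and I2: "2 \<in> {1..n}" using n2 by auto
  have finS: "finite S" using SI finite_subset by blast
  have finT: "finite T" unfolding T_def by simp
  have "1 \<notin> S"
  proof
    assume 1: "1 \<in> S"
    have "Legendre (-1) (int (l 1)) * (-1) ^ card {j\<in>T. Q 1 j} = -1" using cT(2) 1 L2[OF I1] by auto
    then have "Legendre (-1) (int (l 1)) * (-1::int) ^ (if 2 \<in> T then 1 else 0) = -1" by (simp only: cQ1)
    then have "2 \<notin> T" using legm1[OF I1] by (cases "2 \<in> T") auto
    then have 2: "2 \<in> S" unfolding T_def using I2 by auto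
    have "Legendre (-1) (int (l 2)) * (-1) ^ card {j\<in>T. Q 2 j} = -1" using cT(2) 2 L2[OF I2] by auto
    then have "odd (card T)" using legm1[OF I2] by (simp add: cQ2 pw_even pw_odd)
    then obtain k where k: "k \<in> T" by (metis card.empty even_zero ex_in_conv)
    have kne: "k \<noteq> 1" "k \<noteq> 2" "k \<in> {1..n}" using k 1 2 unfolding T_def by auto
    then have k3: "k \<ge> 3" "k \<in> {1..n}" by auto
    have "(-1::int) ^ card (S - {1}) = -1" using cT(1) k L2[OF k3(2)] cQk[OF k3(1)] by auto
    then have "odd (card (S - {1}))" by (simp add: pw_odd) 
    moreover have "card S = card (S - {1}) + 1" using 1 finS card_gt_0_iff[of S] by (auto simp: card_Diff_singleton)
    ultimately have "even (card S)" by simp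
    moreover have "even (card S + card T)" using ST ev by simp
    ultimately show False using \<open>odd (card T)\<close> by simp
  qed
  then have 1: "1 \<in> T" unfolding T_def using I1 by auto
  have "(-1::int) ^ card {j\<in>S. Q 1 j} = -1" using cT(1) 1 L2[OF I1] by auto
  then have "(-1::int) ^ (if 2 \<in> S then 1 else 0) = -1" by (simp only: cQ1)
  then have 2: "2 \<in> S" by (cases "2 \<in> S") auto
  have "Legendre (-1) (int (l 2)) * (-1) ^ card {j\<in>T. Q 2 j} = -1" using cT(2) 2 L2[OF I2] by auto
  then have "odd (card T)" using legm1[OF I2] by (simp add: cQ2 pw_even pw_odd)
  moreover have "even (card S + card T)" using ST ev by simp
  ultimately have "odd (card S)" by simp
  with \<open>1 \<notin> S\<close> show ?thesis by simp
qed

lemma caseA: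
  fixes u v :: int
  assumes SI: "S \<subseteq> {1..n}" and eq: "(\<Prod>j\<in>S. int (l j)) * u^2 - (\<Prod>j\<in>{1..n}-S. int (l j)) * v^2 = 1"
  shows "S = {}"
proof (rule ccontr)
  assume ne: "S \<noteq> {}"
  define T where "T = {1..n} - S"
  note cT = conds[OF SI eq, folded T_def, simplified]
  have L1: "Legendre 1 (int (l k)) = 1" if "k \<in> {1..n}" for k
    using leg_one[OF prI[OF that] gt2[OF that]] .
  have ST: "card S + card T = n" unfolding T_def using cardST[OF SI] .
  have I1: "1 \<in> {1..n}" and I2: "2 \<in> {1..n}" using n2 by auto
  have finS: "finite S" using SI finite_subset by blast
  have finT: "finite T" unfolding T_def by simp
  show False
  proof (cases "1 \<in> S")
    case True
    have "Legendre (-1) (int (l 1)) * (-1) ^ card {j\<in>T. Q 1 j} = 1" using cT(2) True L1[OF I1] by auto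
    then have "Legendre (-1) (int (l 1)) * (-1::int) ^ (if 2 \<in> T then 1 else 0) = 1" by (simp only: cQ1)
    then have "2 \<in> T" using legm1[OF I1] by (cases "2 \<in> T") auto
    then have "2 \<notin> S" unfolding T_def by auto
    have "(-1::int) ^ card {j\<in>S. Q 2 j} = 1" using cT(1) \<open>2 \<in> T\<close> L1[OF I2] by auto
    then have "even (card S)" by (simp add: cQ2 pw_even pw_odd)
    moreover have "even (card S + card T)" using ST ev by simp
    ultimately have eT: "even (card T)" by simp
    have "T \<noteq> {2}" using eT by auto
    then obtain k where k: "k \<in> T" "k \<noteq> 2" using \<open>2 \<in> T\<close> by blast
    have kne: "k \<noteq> 1" "k \<noteq> 2" "k \<in> {1..n}" using k True unfolding T_def by auto
    then have k3: "k \<ge> 3" "k \<in> {1..n}" by auto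
    have "(-1::int) ^ card (S - {1}) = 1" using cT(1) k L1[OF k3(2)] cQk[OF k3(1)] by auto
    then have "even (card (S - {1}))" by (simp add: pw_even)
    moreover have "card S = card (S - {1}) + 1" using True finS card_gt_0_iff[of S] by (auto simp: card_Diff_singleton)
    ultimately show False using \<open>even (card S)\<close> by simp
  next
    case False
    then have 1: "1 \<in> T" unfolding T_def using I1 by auto
    have "(-1::int) ^ card {j\<in>S. Q 1 j} = 1" using cT(1) 1 L1[OF I1] by auto
    then have "(-1::int) ^ (if 2 \<in> S then 1 else 0) = 1" by (simp only: cQ1)
    then have "2 \<notin> S" by (cases "2 \<in> S") auto
    then have 2: "2 \<in> T" unfolding T_def using I2 by auto
    have "(-1::int) ^ card {j\<in>S. Q 2 j} = 1" using cT(1) 2 L1[OF I2] by auto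
    then have eS: "even (card S)" by (simp add: cQ2 pw_even pw_odd)
    obtain k where k: "k \<in> S" using ne by blast
    have kne: "k \<noteq> 1" "k \<noteq> 2" "k \<in> {1..n}" using k False \<open>2 \<notin> S\<close> SI by auto
    then have k3: "k \<ge> 3" "k \<in> {1..n}" by auto
    have "Legendre (-1) (int (l k)) * (-1::int) ^ card (T - {1}) = 1" using cT(2) k L1[OF k3(2)] cQk[OF k3(1)] by auto
    then have "even (card (T - {1}))" using legm1[OF k3(2)] k3 by (simp add: pw_even)
    moreover have "card T = card (T - {1}) + 1" using 1 finT card_gt_0_iff[of T] by (auto simp: card_Diff_singleton)
    moreover have "even (card S + card T)" using ST ev by simp
    ultimately show False using eS by simp
  qed
qed

end



lemma pos_ab:
  fixes a b m :: int
  assumes "m > 0" "a^2 - m*b^2 = 1" "of_int a + of_int b * sqrt (of_int m) > (1::real)"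
  shows "a \<ge> 2 \<and> b \<ge> 1"
proof -
  define s where "s = sqrt (of_int m)"
  have s0: "s > 0" unfolding s_def using assms(1) by simp
  have s2: "s^2 = of_int m" unfolding s_def using assms(1) by simp
  define x where "x = of_int a + of_int b * s"
  define y where "y = of_int a - of_int b * s"
  have x1: "x > 1" using assms(3) unfolding x_def s_def .
  have "x * y = of_int a ^ 2 - of_int m * of_int b ^ 2"
    unfolding x_def y_def using s2 by (simp add: algebra_simps power2_eq_square)
  also have "\<dots> = of_int (a^2 - m*b^2)" by simp
  finally have xy: "x * y = 1" using assms(2) by simp
  then have yx: "y = 1 / x" using x1 by (simp add: eq_divide_eq mult.commute)
  have y0: "y > 0" using x1 yx by simp
  have y1: "y < 1" using x1 yx by simp
  have "of_int b * s > 0" using x1 y1 unfolding x_def y_def by simp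
  then have "b > 0" using s0 by (simp add: zero_less_mult_iff)
  have "real_of_int (2*a) > 1" using x1 y0 unfolding x_def y_def by simp
  then have "a \<ge> 1" by linarith
  have "a^2 = 1 + m*b^2" using assms(2) by simp
  moreover have "m * b^2 \<ge> 1" using assms(1) \<open>b > 0\<close> by (simp add: int_one_le_iff_zero_less)
  ultimately have "a^2 \<ge> 2" by simp
  then have "a \<noteq> 1" by auto
  then have "a \<ge> 2" using \<open>a \<ge> 1\<close> by linarith
  then show ?thesis using \<open>b > 0\<close> by simp
qed




lemma odd_prod_int:
  fixes f :: "nat \<Rightarrow> int"
  assumes "finite A" "\<forall>a\<in>A. odd (f a)"
  shows "odd (\<Prod>a\<in>A. f a)"
  using assms by (induction A rule: finite_induct) auto

lemma prod_mod8:
  fixes f :: "nat \<Rightarrow> int"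
  assumes "finite A" "\<forall>a\<in>A. f a mod 8 = 5"
  shows "(\<Prod>a\<in>A. f a) mod 8 = (if even (card A) then 1 else 5)"
  using assms
proof (induction A rule: finite_induct)
  case empty then show ?case by simp
next
  case (insert x F)
  have IH: "(\<Prod>a\<in>F. f a) mod 8 = (if even (card F) then 1 else 5)" using insert by simp
  have "(\<Prod>a\<in>insert x F. f a) mod 8 = (f x * (\<Prod>a\<in>F. f a)) mod 8" using insert by simp
  also have "\<dots> = ((f x mod 8) * ((\<Prod>a\<in>F. f a) mod 8)) mod 8" by (simp add: mod_mult_eq)
  also have "\<dots> = (5 * (if even (card F) then 1 else 5)) mod 8" using insert IH by simp
  also have "\<dots> = (if even (card (insert x F)) then 1 else 5)" using insert by simp
  finally show ?case .
qed

lemma odd_sq_mod8: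
  fixes u :: int
  assumes "odd u" shows "u^2 mod 8 = 1"
proof -
  have "u mod 8 = 1 \<or> u mod 8 = 3 \<or> u mod 8 = 5 \<or> u mod 8 = 7" using assms by presburger
  moreover have "u^2 mod 8 = (u mod 8)^2 mod 8" by (simp add: power_mod)
  ultimately show ?thesis by auto
qed

lemma coprime_consec:
  fixes k :: int shows "coprime (k+1) k"
proof (rule coprimeI)
  fix c assume "c dvd k+1" "c dvd k"
  then have "c dvd (k+1) - k" by (rule dvd_diff)
  then show "is_unit c" by simp
qed

lemma coprime_even_pm:
  fixes a :: int assumes "even a" shows "coprime (a+1) (a-1)"
proof (rule coprimeI)
  obtain k where k: "a = 2*k" using assms by blast
  fix c assume "c dvd a+1" "c dvd a-1"
  then have "c dvd (1-k)*(a+1) + k*(a-1)" by simp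
  moreover have "(1-k)*(a+1) + k*(a-1) = 1" using k by (simp add: algebra_simps)
  ultimately show "is_unit c" by simp
qed




theorem lemma5p4:
  fixes n :: nat and l :: "nat \<Rightarrow> nat" and m a b :: int
  assumes "n \<ge> 2" and "even n"
    and "\<forall>i\<in>{1..n}. prime (l i)"
    and "inj_on l {1..n}"
    and "l 1 mod 8 = 3"
    and "\<forall>i\<in>{2..n}. l i mod 8 = 5"
    and "Legendre (int (l 1)) (int (l 2)) = -1"
    and "\<forall>j\<in>{3..n}. Legendre (int (l 1)) (int (l j)) = 1"
    and "\<forall>i j. 2 \<le> i \<and> i < j \<and> j \<le> n \<longrightarrow> Legendre (int (l i)) (int (l j)) = -1"
    and "m = (\<Prod>i\<in>{1..n}. int (l i))"
    and "fundamental_unit m a b"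
  shows "\<exists>a'. odd a' \<and> a = 4 * a'"
proof -
  have "DL n l" unfolding DL_def using assms(1-9) by blast
  then interpret D: DL n l .
  note mdef = assms(10)
  have fu1: "a^2 - m*b^2 = 1 \<or> a^2 - m*b^2 = -1"
    using assms(11) unfolding fundamental_unit_def is_unit_Zsqrt_def by blast
  have fu2: "of_int a + of_int b * sqrt (of_int m) > (1::real)"
    using assms(11) unfolding fundamental_unit_def by blast
  have fu3: "\<And>x y. is_unit_Zsqrt m x y \<Longrightarrow> of_int x + of_int y * sqrt (of_int m) > (1::real) \<Longrightarrow>
        of_int a + of_int b * sqrt (of_int m) \<le> (of_int x + of_int y * sqrt (of_int m) :: real)"
    using assms(11) unfolding fundamental_unit_def by blast
  have I1: "1 \<in> {1..n}" using assms(1) by simp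
  have mpos: "m > 0" unfolding mdef using D.prI by (intro prod_pos) (auto simp: prime_gt_0_nat)
  have l1dvd: "int (l 1) dvd m" unfolding mdef using I1 by (intro dvd_prodI) auto
  have norm: "a^2 - m*b^2 = 1"
  proof (rule ccontr)
    assume "a^2 - m*b^2 \<noteq> 1"
    then have e: "1*a^2 - m*b^2 = -1" using fu1 by simp
    have nd: "\<not> int (l 1) dvd -1" using D.gt2[OF I1] by simp
    have "Legendre 1 (int (l 1)) = Legendre (-1) (int (l 1))"
      by (rule leg_cond[OF D.prI[OF I1] D.gt2[OF I1] l1dvd e nd])
    then show False using leg_one[OF D.prI[OF I1] D.gt2[OF I1]] D.legm1[OF I1] by simp
  qed
  have ab: "a \<ge> 2" "b \<ge> 1" using pos_ab[OF mpos norm fu2] by auto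
  have modd: "odd m" unfolding mdef
    by (rule odd_prod_int) (use D.prI D.gt2 prime_odd_nat in auto)
  have finI: "finite {1..n}" by simp
  show ?thesis
  proof (cases "even a")
    case True
    have cop: "coprime (a+1) (a-1)" using coprime_even_pm[OF True] .
    have XY: "(a+1)*(a-1) = (\<Prod>i\<in>{1..n}. int (l i)) * b^2"
      using norm mdef by (simp add: algebra_simps power2_eq_square)
    obtain S u v where S: "S \<subseteq> {1..n}" "u > 0" "v > 0"
        "a+1 = (\<Prod>i\<in>S. int (l i)) * u^2" "a-1 = (\<Prod>i\<in>{1..n}-S. int (l i)) * v^2"
      using factor[OF finI D.pr D.inj _ _ cop XY] ab by auto
    have eq2: "(\<Prod>i\<in>S. int (l i)) * u^2 - (\<Prod>i\<in>{1..n}-S. int (l i)) * v^2 = 2"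
      using S(4,5) by linarith
    have cB: "1 \<notin> S" "odd (card S)" using D.caseB[OF S(1) eq2] by auto
    have m5: "\<forall>j\<in>S. int (l j) mod 8 = 5"
    proof
      fix j assume j: "j \<in> S"
      have "j \<noteq> 1" "j \<in> {1..n}" using j S(1) cB(1) by auto
      then have "j \<in> {2..n}" by auto
      then have "l j mod 8 = 5" using assms(6) by auto
      then have "int (l j mod 8) = 5" by simp
      then show "int (l j) mod 8 = 5" by (simp add: of_nat_mod)
    qed
    have finS: "finite S" using S(1) finite_subset by blast
    have d5: "(\<Prod>i\<in>S. int (l i)) mod 8 = 5" using prod_mod8[OF finS m5] cB(2) by simp
    have "odd (a+1)" using True by simp
    then have uodd: "odd u" using S(4) by (auto simp: even_mult_iff)
    have "(a+1) mod 8 = (((\<Prod>i\<in>S. int (l i)) mod 8) * (u^2 mod 8)) mod 8"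
      using S(4) by (simp add: mod_mult_eq)
    also have "\<dots> = 5" using d5 odd_sq_mod8[OF uodd] by simp
    finally have "(a+1) mod 8 = 5" .
    then have "a mod 8 = 4" by presburger
    then have "odd (a div 4) \<and> a = 4 * (a div 4)" by presburger
    then show ?thesis by blast
  next
    case False
    have "odd (a^2)" using False by simp
    moreover have "m*b^2 = a^2 - 1" using norm by simp
    ultimately have "even (m*b^2)" by simp
    then have "even b" using modd by (simp add: even_mult_iff)
    then obtain c where c: "b = 2*c" by blast
    obtain k where k: "a = 2*k+1" using False by (metis oddE)
    have k1: "k \<ge> 1" using ab k by simp
    have c1: "c \<ge> 1" using ab c by simp
    have "4*((k+1)*k) = 4*(m*c^2)" using norm k c by (simp add: algebra_simps power2_eq_square)
    then have XY: "(k+1)*k = (\<Prod>i\<in>{1..n}. int (l i)) * c^2" using mdef by simp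
    obtain S u v where S: "S \<subseteq> {1..n}" "u > 0" "v > 0"
        "k+1 = (\<Prod>i\<in>S. int (l i)) * u^2" "k = (\<Prod>i\<in>{1..n}-S. int (l i)) * v^2"
      using factor[OF finI D.pr D.inj _ _ coprime_consec XY] k1 by auto
    have eq1: "(\<Prod>i\<in>S. int (l i)) * u^2 - (\<Prod>i\<in>{1..n}-S. int (l i)) * v^2 = 1"
      using S(4,5) by linarith
    have "S = {}" using D.caseA[OF S(1) eq1] .
    then have uv: "k+1 = u^2" "k = m * v^2" using S(4,5) mdef by auto
    have kk: "(k+1)*k = m*c^2" using XY mdef by simp
    have "m * c^2 = u^2 * (m*v^2)" using kk uv by metis
    also have "\<dots> = m * (u*v)^2" by (simp add: power_mult_distrib)
    finally have "m * c^2 = m * (u*v)^2" .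
    then have "c^2 = (u*v)^2" using mpos by simp
    then have cuv: "c = u*v" using power_eq_imp_eq_base[of c 2 "u*v"] c1 S(2,3) by simp
    have aeq: "a = u^2 + m*v^2" using k uv by simp
    have beq: "b = 2*u*v" using c cuv by simp
    define s where "s = sqrt (of_int m)"
    have s0: "s > 0" unfolding s_def using mpos by simp
    have s2: "s^2 = of_int m" unfolding s_def using mpos by simp
    have unit: "is_unit_Zsqrt m u v" unfolding is_unit_Zsqrt_def using uv by simp
    have vs: "of_int v * s > 0" using S(3) s0 by simp
    have "of_int u \<ge> (1::real)" using S(2) by simp
    then have eta1: "of_int u + of_int v * s > (1::real)" using vs by linarith
    have le: "of_int a + of_int b * s \<le> of_int u + of_int v * s"
      using fu3[OF unit] eta1 unfolding s_def by blast
    have "of_int a + of_int b * s = (of_int u + of_int v * s)^2"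
      using s2 unfolding aeq beq by (simp add: algebra_simps power2_eq_square)
    then have "(of_int u + of_int v * s) * (of_int u + of_int v * s) \<le> (of_int u + of_int v * s) * 1"
      using le by (simp add: power2_eq_square)
    then have "of_int u + of_int v * s \<le> (1::real)" using eta1 by (simp add: mult_le_cancel_left)
    then show ?thesis using eta1 by simp
  qed
qed


end
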